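(* Let $0<\varepsilon\le\tfrac13$, set $w=\varepsilon$ and $\delta=\dfrac{(1+\varepsilon)(1+w)}{((1+\varepsilon)(1+w)L)^{1/\varepsilon}}$, and run $\textsc{ApproxGeneral}(\varepsilon,\delta,w)$ with any $(1+w)$-approximate oracle $\mathcal{O}$. Then the following hold. (i) $\tau\le m\left\lceil\log_{1+\varepsilon}\frac{(1+\varepsilon)(1+w)}{\delta}\right\rceil$. (ii) $x_\tau/\log_{1+\varepsilon}\frac{(1+\varepsilon)(1+w)}{\delta}$ is a feasible $L$-bounded flow. (iii) The value of this scaled flow is at least $\beta/(1+5\varepsilon)$.
   Context: Let $G=(V,E)$ be a finite directed graph with $m=|E|$, capacities $c:E\to\mathbb{R}_{>0}$, edge lengths $\ell:E\to\mathbb{Z}_{\ge1}$, distinct vertices $s,t$, and a positive integer $L$. Let $\mathcal{P}_L$ be the set of directed simple $s$-$t$ paths $P$ with $\ell(P)=\sum_{e\in P}\ell(e)\le L$, and assume $\mathcal{P}_L\ne\emptyset$. An $L$-bounded flow is a function $x:\mathcal{P}_L\to\mathbb{R}_{\ge0}$, with value $\sum_P x(P)$. It is feasible if $\sum_{P\ni e}x(P)\le c(e)$ for all $e$. For $y:E\to\mathbb{R}_{\ge0}$ let $y(P)=\sum_{e\in P}y(e)$ and $d^L_y(s,t)=\min_{P\in\mathcal{P}_L}y(P)$. Let $\beta$ be the optimum of the LP $\min\{\sum_e c(e)y(e): y\ge0,\ y(P)\ge1\ \forall P\in\mathcal{P}_L\}$, which equals the maximum value of a feasible $L$-bounded flow.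 Logarithms without base are natural. A $(1+w)$-approximate oracle ($w>0$) is a map $\mathcal{O}$ assigning to each $y:E\to\mathbb{R}_{\ge0}$ a path $\mathcal{O}(y)\in\mathcal{P}_L$ with $y(\mathcal{O}(y))\le(1+w)\,d^L_y(s,t)$. Algorithm $\textsc{ApproxGeneral}(\varepsilon,\delta,w)$: - Initialize $i=0$, $y_0\equiv\delta$, and $x_0\equiv0$. Let $\alpha^L(i)=d^L_{y_i}(s,t)$ and $\bar\alpha^L(i)=y_i(\mathcal{O}(y_i))$. - While $\bar\alpha^L(i)<1+w$: - set $i\leftarrow i+1$; - let $P_i=\mathcal{O}(y_{i-1})$ and $c_i=\min_{e\in P_i}c(e)$; - set $x_i=x_{i-1}$ except $x_i(P_i)=x_{i-1}(P_i)+c_i$; - set $y_i(e)=y_{i-1}(e)(1+\varepsilon c_i/c(e))$ for $e\in P_i$, and $y_i(e)=y_{i-1}(e)$ otherwise. - Return $x_i$. $\tau$ is the number of iterations, and $f_i=\sum_Px_i(P)$. *)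

theory Defs
  imports Complex_Main
begin

definition edges_of :: "'v list \<Rightarrow> ('v \<times> 'v) list" where
  "edges_of vs = zip vs (tl vs)"

definition simple_st_path :: "('v \<times> 'v) set \<Rightarrow> 'v \<Rightarrow> 'v \<Rightarrow> 'v list \<Rightarrow> bool" where
  "simple_st_path E s t vs \<longleftrightarrow> vs \<noteq> [] \<and> hd vs = s \<and> last vs = t \<and> distinct vs
      \<and> set (edges_of vs) \<subseteq> E"

definition plen :: "('v \<times> 'v \<Rightarrow> 'a::comm_monoid_add) \<Rightarrow> 'v list \<Rightarrow> 'a" where
  "plen y P = (\<Sum>e\<in>set (edges_of P). y e)"

definition bounded_paths ::
  "('v \<times> 'v) set \<Rightarrow> ('v \<times> 'v \<Rightarrow> nat) \<Rightarrow> 'v \<Rightarrow> 'v \<Rightarrow> nat \<Rightarrow> 'v list set" where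
  "bounded_paths E len s t L = {P. simple_st_path E s t P \<and> plen len P \<le> L}"

definition dL :: "('v \<times> 'v) set \<Rightarrow> ('v \<times> 'v \<Rightarrow> nat) \<Rightarrow> 'v \<Rightarrow> 'v \<Rightarrow> nat
     \<Rightarrow> ('v \<times> 'v \<Rightarrow> real) \<Rightarrow> real" where
  "dL E len s t L y = Min ((\<lambda>P. plen y P) ` bounded_paths E len s t L)"

definition beta :: "('v \<times> 'v) set \<Rightarrow> ('v \<times> 'v \<Rightarrow> real) \<Rightarrow> ('v \<times> 'v \<Rightarrow> nat)
     \<Rightarrow> 'v \<Rightarrow> 'v \<Rightarrow> nat \<Rightarrow> real" where
  "beta E c len s t L = Inf {(\<Sum>e\<in>E. c e * y e) | y.
       (\<forall>e\<in>E. 0 \<le> y e) \<and> (\<forall>P\<in>bounded_paths E len s t L. 1 \<le> plen y P)}"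

definition approx_oracle :: "('v \<times> 'v) set \<Rightarrow> ('v \<times> 'v \<Rightarrow> nat) \<Rightarrow> 'v \<Rightarrow> 'v \<Rightarrow> nat
     \<Rightarrow> real \<Rightarrow> (('v \<times> 'v \<Rightarrow> real) \<Rightarrow> 'v list) \<Rightarrow> bool" where
  "approx_oracle E len s t L w Orc \<longleftrightarrow> (\<forall>y. (\<forall>e\<in>E. 0 \<le> y e) \<longrightarrow>
      Orc y \<in> bounded_paths E len s t L \<and> plen y (Orc y) \<le> (1 + w) * dL E len s t L y)"

definition feasible_Lflow :: "('v \<times> 'v) set \<Rightarrow> ('v \<times> 'v \<Rightarrow> real) \<Rightarrow> ('v \<times> 'v \<Rightarrow> nat)
     \<Rightarrow> 'v \<Rightarrow> 'v \<Rightarrow> nat \<Rightarrow> ('v list \<Rightarrow> real) \<Rightarrow> bool" where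
  "feasible_Lflow E c len s t L x \<longleftrightarrow>
     (\<forall>P. 0 \<le> x P) \<and> (\<forall>P. P \<notin> bounded_paths E len s t L \<longrightarrow> x P = 0) \<and>
     (\<forall>e\<in>E. (\<Sum>P\<in>{P\<in>bounded_paths E len s t L. e \<in> set (edges_of P)}. x P) \<le> c e)"

definition flow_value :: "('v \<times> 'v) set \<Rightarrow> ('v \<times> 'v \<Rightarrow> nat) \<Rightarrow> 'v \<Rightarrow> 'v \<Rightarrow> nat
     \<Rightarrow> ('v list \<Rightarrow> real) \<Rightarrow> real" where
  "flow_value E len s t L x = (\<Sum>P\<in>bounded_paths E len s t L. x P)"

definition ag_step :: "real \<Rightarrow> (('v \<times> 'v \<Rightarrow> real) \<Rightarrow> 'v list) \<Rightarrow> ('v \<times> 'v \<Rightarrow> real)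
     \<Rightarrow> ('v list \<Rightarrow> real) \<times> ('v \<times> 'v \<Rightarrow> real) \<Rightarrow> ('v list \<Rightarrow> real) \<times> ('v \<times> 'v \<Rightarrow> real)" where
  "ag_step \<epsilon> Orc c st = (let x = fst st; y = snd st; P = Orc y;
       ci = Min (c ` set (edges_of P)) in
     (x(P := x P + ci),
      \<lambda>e. if e \<in> set (edges_of P) then y e * (1 + \<epsilon> * ci / c e) else y e))"

primrec ag_state :: "real \<Rightarrow> real \<Rightarrow> (('v \<times> 'v \<Rightarrow> real) \<Rightarrow> 'v list) \<Rightarrow> ('v \<times> 'v \<Rightarrow> real)
     \<Rightarrow> nat \<Rightarrow> ('v list \<Rightarrow> real) \<times> ('v \<times> 'v \<Rightarrow> real)" where
  "ag_state \<epsilon> \<delta> Orc c 0 = (\<lambda>_. 0, \<lambda>_. \<delta>)"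
| "ag_state \<epsilon> \<delta> Orc c (Suc i) = ag_step \<epsilon> Orc c (ag_state \<epsilon> \<delta> Orc c i)"

definition ag_continue :: "real \<Rightarrow> real \<Rightarrow> real \<Rightarrow> (('v \<times> 'v \<Rightarrow> real) \<Rightarrow> 'v list)
     \<Rightarrow> ('v \<times> 'v \<Rightarrow> real) \<Rightarrow> nat \<Rightarrow> bool" where
  "ag_continue \<epsilon> \<delta> w Orc c i \<longleftrightarrow>
     (let y = snd (ag_state \<epsilon> \<delta> Orc c i) in plen y (Orc y) < 1 + w)"

end

theory Submission
  imports Defs "HOL-Analysis.Convex"
begin

lemma ln_lower: assumes "0 \<le> x" shows "x - x^2/2 \<le> ln (1 + (x::real))"
proof -
  have "(\<lambda>x. ln (1 + x) - x + x^2/2) 0 \<le> (\<lambda>x. ln (1 + x) - x + x^2/2) x"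
  proof (rule DERIV_nonneg_imp_nondecreasing[OF assms])
    fix y :: real assume y: "0 \<le> y" "y \<le> x"
    show "\<exists>d. ((\<lambda>x. ln (1 + x) - x + x^2/2) has_real_derivative d) (at y) \<and> 0 \<le> d"
    proof (intro exI conjI)
      show "((\<lambda>x. ln (1 + x) - x + x^2/2) has_real_derivative (1/(1+y) - 1 + y)) (at y)"
        using y by (auto intro!: derivative_eq_intros)
      have "1/(1+y) - 1 + y = y^2/(1+y)" using y by (simp add: field_simps power2_eq_square)
      then show "0 \<le> 1/(1+y) - 1 + y" using y by simp
    qed
  qed
  then show ?thesis by simp
qed
lemma ln_conc: assumes "0 \<le> a" "a \<le> 1" "0 < e" shows "a * ln (1 + e) \<le> ln (1 + a * (e::real))"
proof -
  have "concave_on {0<..} ln" by (rule ln_concave)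
  then have "(1-a) * ln 1 + a * ln (1+e) \<le> ln ((1-a) *\<^sub>R 1 + a *\<^sub>R (1+e))"
    using assms unfolding concave_on_iff by (metis diff_add_cancel diff_ge_0_iff_ge greaterThan_iff zero_less_one add_pos_pos)
  then show ?thesis by (simp add: algebra_simps)
qed


lemma gronwall:
  fixes a g :: "nat \<Rightarrow> real"
  assumes h: "\<And>i. a i \<le> A + Phi * (\<Sum>j<i. g j * a j)" and g: "\<And>j. 0 \<le> g j"
    and a: "\<And>j. 0 \<le> a j" and Phi: "0 \<le> Phi" and A: "0 \<le> A"
  shows "a n \<le> A * exp (Phi * (\<Sum>j<n. g j))"
proof -
  define S where "S i = A + Phi * (\<Sum>j<i. g j * a j)" for i
  have S0: "0 \<le> S i" for i unfolding S_def using g a Phi A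
    by (intro add_nonneg_nonneg mult_nonneg_nonneg sum_nonneg) auto
  have "S i \<le> A * exp (Phi * (\<Sum>j<i. g j))" for i
  proof (induction i)
    case 0 show ?case by (simp add: S_def)
  next
    case (Suc i)
    have "S (Suc i) = S i + Phi * g i * a i" by (simp add: S_def algebra_simps)
    also have "\<dots> \<le> S i + Phi * g i * S i"
      using h[of i] g[of i] Phi by (simp add: S_def mult_left_mono)
    also have "\<dots> = S i * (1 + Phi * g i)" by (simp add: algebra_simps)
    also have "\<dots> \<le> S i * exp (Phi * g i)"
      using S0[of i] exp_ge_add_one_self by (intro mult_left_mono) auto
    also have "\<dots> \<le> A * exp (Phi * (\<Sum>j<i. g j)) * exp (Phi * g i)"
      using Suc by (intro mult_right_mono) auto
    also have "\<dots> = A * exp (Phi * (\<Sum>j<Suc i. g j))"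
      by (simp add: exp_add[symmetric] algebra_simps)
    finally show ?case .
  qed
  then show ?thesis using h[of n] unfolding S_def by (meson order_trans)
qed

lemma sum_upd: "finite A \<Longrightarrow> (\<Sum>x\<in>A. (f(p := f p + d)) x) = (\<Sum>x\<in>A. f x) + (if p \<in> A then d else (0::real))"
proof (cases "p \<in> A")
  case True
  assume fA: "finite A"
  have "(\<Sum>x\<in>A. (f(p := f p + d)) x) = (f(p := f p + d)) p + (\<Sum>x\<in>A-{p}. (f(p := f p + d)) x)"
    using True fA by (simp add: sum.remove)
  also have "(\<Sum>x\<in>A-{p}. (f(p := f p + d)) x) = (\<Sum>x\<in>A-{p}. f x)" by (rule sum.cong) auto
  finally show ?thesis using True fA by (simp add: sum.remove)
next
  case False
  then show ?thesis by (auto intro!: sum.cong)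
qed

lemma edges_ne: "hd vs \<noteq> last vs \<Longrightarrow> vs \<noteq> [] \<Longrightarrow> edges_of vs \<noteq> []"
  by (cases vs rule: remdups_adj.cases) (auto simp: edges_of_def)

lemma verts_in_edges:
  assumes "2 \<le> length vs" "x \<in> set vs"
  shows "x \<in> fst ` set (edges_of vs) \<union> snd ` set (edges_of vs)"
proof -
  obtain k where k: "k < length vs" "x = vs ! k" using assms(2) by (auto simp: in_set_conv_nth)
  show ?thesis
  proof (cases "k < length vs - 1")
    case True
    then have "(vs ! k, tl vs ! k) \<in> set (edges_of vs)"
      unfolding edges_of_def set_zip by (auto intro!: exI[of _ k])
    then show ?thesis using k by force
  next
    case False
    then have kk: "k = length vs - 1" using k by simp
    have "(vs ! (k-1), tl vs ! (k-1)) \<in> set (edges_of vs)"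
      unfolding edges_of_def set_zip using assms(1) kk by (auto intro!: exI[of _ "k-1"])
    moreover have "tl vs ! (k-1) = vs ! k" using assms(1) kk by (simp add: nth_tl Suc_diff_Suc)
    ultimately show ?thesis using k by force
  qed
qed



locale agl =
  fixes E :: "('v \<times> 'v) set" and c :: "'v \<times> 'v \<Rightarrow> real" and len :: "'v \<times> 'v \<Rightarrow> nat"
    and s t :: 'v and L :: nat and eps w dl :: real
    and Orc :: "('v \<times> 'v \<Rightarrow> real) \<Rightarrow> 'v list"
  assumes finE: "finite E" and cpos: "\<forall>e\<in>E. 0 < c e" and lenpos: "\<forall>e\<in>E. 1 \<le> len e"
    and st: "s \<noteq> t" and BPne: "bounded_paths E len s t L \<noteq> {}"
    and epos: "0 < eps" and wpos: "0 \<le> w" and dlpos: "0 < dl"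
    and orc: "approx_oracle E len s t L w Orc"
begin

definition "BP = bounded_paths E len s t L"
definition "yy i = snd (ag_state eps dl Orc c i)"
definition "xx i = fst (ag_state eps dl Orc c i)"
definition "PP i = Orc (yy i)"
definition "cc i = Min (c ` set (edges_of (PP i)))"
definition "alpha i = dL E len s t L (yy i)"
definition "cont i = ag_continue eps dl w Orc c i"

lemma BP_edges: "P \<in> BP \<Longrightarrow> set (edges_of P) \<subseteq> E"
  by (simp add: BP_def bounded_paths_def simple_st_path_def)

lemma BP_edges_ne: "P \<in> BP \<Longrightarrow> set (edges_of P) \<noteq> {}"
  using st edges_ne[of P] by (auto simp: BP_def bounded_paths_def simple_st_path_def)

lemma BP_card: "P \<in> BP \<Longrightarrow> card (set (edges_of P)) \<le> L"
proof -
  assume P: "P \<in> BP"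
  have "card (set (edges_of P)) = (\<Sum>e\<in>set (edges_of P). (1::nat))" by simp
  also have "\<dots> \<le> (\<Sum>e\<in>set (edges_of P). len e)"
    using BP_edges[OF P] lenpos by (intro sum_mono) auto
  also have "\<dots> \<le> L" using P by (simp add: BP_def bounded_paths_def plen_def)
  finally show ?thesis .
qed

lemma finBP: "finite BP"
proof -
  define V where "V = fst ` E \<union> snd ` E"
  have fV: "finite V" using finE by (simp add: V_def)
  have "BP \<subseteq> {xs. set xs \<subseteq> V \<and> length xs \<le> card V}"
  proof
    fix P assume P: "P \<in> BP"
    have sp: "simple_st_path E s t P" using P by (simp add: BP_def bounded_paths_def)
    have len2: "2 \<le> length P"
    proof (rule ccontr)
      assume "\<not> 2 \<le> length P"
      moreover have "0 < length P" using sp by (simp add: simple_st_path_def)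
      ultimately have "length P = 1" by linarith
      then obtain a where "P = [a]" by (cases P) auto
      then show False using sp st by (auto simp: simple_st_path_def)
    qed
    have "set P \<subseteq> V" using verts_in_edges[OF len2] BP_edges[OF P] unfolding V_def by blast
    moreover have "length P \<le> card V"
      using sp `set P \<subseteq> V` fV by (metis card_mono distinct_card simple_st_path_def)
    ultimately show "P \<in> {xs. set xs \<subseteq> V \<and> length xs \<le> card V}" by simp
  qed
  then show ?thesis using finite_lists_length_le[OF fV] finite_subset by blast
qed

lemma step_x: "xx (Suc i) = (xx i)(PP i := xx i (PP i) + cc i)"
  by (simp add: xx_def PP_def cc_def yy_def ag_step_def Let_def)

lemma step_y: "yy (Suc i) = (\<lambda>e. if e \<in> set (edges_of (PP i)) then yy i e * (1 + eps * cc i / c e) else yy i e)"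
  unfolding yy_def PP_def cc_def by (simp add: ag_step_def Let_def)

lemma y0: "yy 0 = (\<lambda>_. dl)" by (simp add: yy_def)
lemma x0: "xx 0 = (\<lambda>_. 0)" by (simp add: xx_def)

lemma PP_BP_if: "\<forall>e. 0 < yy i e \<Longrightarrow> PP i \<in> BP"
  using orc unfolding approx_oracle_def PP_def BP_def by (meson less_imp_le)

lemma cc_props:
  assumes "PP i \<in> BP"
  shows "0 < cc i" "\<And>e. e \<in> set (edges_of (PP i)) \<Longrightarrow> cc i \<le> c e"
    "\<exists>e\<in>set (edges_of (PP i)). c e = cc i"
proof -
  have ne: "c ` set (edges_of (PP i)) \<noteq> {}" using BP_edges_ne[OF assms] by simp
  have f: "finite (c ` set (edges_of (PP i)))" by simp
  show "0 < cc i" unfolding cc_def using Min_gr_iff[OF f ne] BP_edges[OF assms] cpos by auto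
  show "\<And>e. e \<in> set (edges_of (PP i)) \<Longrightarrow> cc i \<le> c e" unfolding cc_def using f by simp
  show "\<exists>e\<in>set (edges_of (PP i)). c e = cc i" unfolding cc_def using Min_in[OF f ne] by auto
qed

lemma ypos: "0 < yy i e"
proof (induction i arbitrary: e)
  case 0 then show ?case by (simp add: y0 dlpos)
next
  case (Suc i)
  have P: "PP i \<in> BP" using Suc PP_BP_if by blast
  show ?case
  proof (cases "e \<in> set (edges_of (PP i))")
    case True
    then have "0 < c e" using BP_edges[OF P] cpos by auto
    then have "0 < 1 + eps * cc i / c e" using cc_props(1)[OF P] epos by (simp add: add_pos_nonneg)
    then show ?thesis using True Suc by (simp add: step_y)
  qed (use Suc in \<open>simp add: step_y\<close>)
qed

lemma PP_BP: "PP i \<in> BP" using PP_BP_if ypos by blast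

lemmas cc_pos = cc_props(1)[OF PP_BP] and cc_le = cc_props(2)[OF PP_BP] and cc_ex = cc_props(3)[OF PP_BP]

lemma PP_E: "e \<in> set (edges_of (PP i)) \<Longrightarrow> e \<in> E" using BP_edges[OF PP_BP] by auto

lemma cPP: "e \<in> set (edges_of (PP i)) \<Longrightarrow> 0 < c e" using PP_E cpos by auto

lemma orc_bound: "plen (yy i) (PP i) \<le> (1 + w) * alpha i"
  using orc ypos unfolding approx_oracle_def PP_def alpha_def by (meson less_imp_le)

lemma alpha_le: "P \<in> BP \<Longrightarrow> alpha i \<le> plen (yy i) P"
  unfolding alpha_def dL_def BP_def[symmetric] using finBP by simp

lemma plen_nonneg: "0 \<le> plen (yy i) P" unfolding plen_def using ypos by (simp add: sum_nonneg less_imp_le)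

lemma alpha_nonneg: "0 \<le> alpha i"
proof -
  have "alpha i \<in> (\<lambda>P. plen (yy i) P) ` BP"
    unfolding alpha_def dL_def BP_def[symmetric] using finBP BPne BP_def by (intro Min_in) auto
  then show ?thesis using plen_nonneg by auto
qed

lemma y_mono: "yy i e \<le> yy (Suc i) e"
proof (cases "e \<in> set (edges_of (PP i))")
  case True
  have "0 \<le> eps * cc i / c e" using cc_pos[of i] cPP[OF True] epos by simp
  then show ?thesis using True ypos[of i e] by (simp add: step_y)
qed (simp add: step_y)

lemma y_ge_dl: "dl \<le> yy i e"
  by (induction i) (auto simp: y0 intro: order_trans[OF _ y_mono])

lemma cont_iff: "cont i \<longleftrightarrow> plen (yy i) (PP i) < 1 + w"
  by (simp add: cont_def ag_continue_def yy_def PP_def Let_def)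

lemma y_le_plen: "e \<in> set (edges_of (PP i)) \<Longrightarrow> yy i e \<le> plen (yy i) (PP i)"
  unfolding plen_def using ypos by (intro member_le_sum) (auto simp: less_imp_le)

end

context agl begin

definition "flow i = (\<Sum>P\<in>BP. xx i P)"
definition "FF e i = (\<Sum>P\<in>{P\<in>BP. e \<in> set (edges_of P)}. xx i P)"
definition "bb j = (SOME e. e \<in> set (edges_of (PP j)) \<and> c e = cc j)"
definition "cnt e i = (\<Sum>j<i. if bb j = e then 1 else 0 :: nat)"
definition "DD i = (\<Sum>e\<in>E. c e * yy i e)"

lemma xx_nonneg: "0 \<le> xx i P"
  by (induction i arbitrary: P) (auto simp: x0 step_x intro: add_nonneg_nonneg less_imp_le[OF cc_pos])

lemma xx_out: "P \<notin> BP \<Longrightarrow> xx i P = 0"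
  by (induction i) (auto simp: x0 step_x PP_BP)

lemma flow_eq: "flow i = (\<Sum>j<i. cc j)"
proof (induction i)
  case (Suc i)
  have "flow (Suc i) = flow i + cc i" unfolding flow_def step_x
    by (subst sum_upd[OF finBP]) (simp add: PP_BP)
  then show ?case using Suc by simp
qed (simp add: flow_def x0)

lemma FF_step: "FF e (Suc i) = FF e i + (if e \<in> set (edges_of (PP i)) then cc i else 0)"
  unfolding FF_def step_x using finBP PP_BP by (subst sum_upd) auto

lemma FF0: "FF e 0 = 0" by (simp add: FF_def x0)

lemma y_F: "e \<in> E \<Longrightarrow> dl * (1+eps) powr (FF e i / c e) \<le> yy i e"
proof (induction i)
  case 0 then show ?case using dlpos by (simp add: FF0 y0)
next
  case (Suc i)
  show ?case
  proof (cases "e \<in> set (edges_of (PP i))")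
    case True
    define a where "a = cc i / c e"
    have ce: "0 < c e" using cPP[OF True] .
    have a01: "0 \<le> a" "a \<le> 1" using cc_pos[of i] cc_le[OF True] ce by (auto simp: a_def)
    have "(1+eps) powr a = exp (a * ln (1+eps))" using epos by (simp add: powr_def)
    also have "\<dots> \<le> exp (ln (1 + a * eps))" using ln_conc[OF a01 epos] by simp
    also have "\<dots> = 1 + a * eps" using a01 epos by (simp add: add_pos_nonneg)
    finally have pa: "(1+eps) powr a \<le> 1 + a * eps" .
    have "dl * (1+eps) powr (FF e (Suc i) / c e) = dl * (1+eps) powr (FF e i / c e) * (1+eps) powr a"
      using True ce by (simp add: FF_step a_def add_divide_distrib powr_add)
    also have "\<dots> \<le> yy i e * (1 + a * eps)"
      using Suc pa dlpos epos ypos[of i e] by (intro mult_mono) (auto simp: less_imp_le)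
    also have "\<dots> = yy (Suc i) e" using True by (simp add: step_y a_def)
    finally show ?thesis .
  next
    case False
    then show ?thesis using Suc by (simp add: FF_step step_y)
  qed
qed

lemma bb_props: "bb j \<in> set (edges_of (PP j))" "c (bb j) = cc j"
proof -
  have "\<exists>e. e \<in> set (edges_of (PP j)) \<and> c e = cc j" using cc_ex[of j] by blast
  then have "bb j \<in> set (edges_of (PP j)) \<and> c (bb j) = cc j" unfolding bb_def by (rule someI_ex)
  then show "bb j \<in> set (edges_of (PP j))" "c (bb j) = cc j" by auto
qed

lemma bb_E: "bb j \<in> E" using PP_E bb_props(1) by blast

lemma y_cnt: "dl * (1+eps)^cnt e i \<le> yy i e"
proof (induction i)
  case 0 then show ?case by (simp add: cnt_def y0)
next
  case (Suc i)
  show ?case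
  proof (cases "bb i = e")
    case True
    have ce: "0 < c e" using cPP bb_props(1) True by blast
    have "yy (Suc i) e = yy i e * (1 + eps)" using bb_props[of i] True ce by (simp add: step_y)
    moreover have "cnt e (Suc i) = Suc (cnt e i)" using True by (simp add: cnt_def)
    ultimately show ?thesis using Suc epos by (simp add: mult.assoc[symmetric])
  next
    case False
    then have "cnt e (Suc i) = cnt e i" by (simp add: cnt_def)
    then show ?thesis using Suc y_mono[of i e] by simp
  qed
qed

lemma sum_cnt: "(\<Sum>e\<in>E. cnt e i) = i"
proof -
  have "(\<Sum>e\<in>E. cnt e i) = (\<Sum>j<i. \<Sum>e\<in>E. if bb j = e then 1 else 0 :: nat)"
    unfolding cnt_def by (rule sum.swap)
  also have "\<dots> = (\<Sum>j<i. 1)" using bb_E finE by (intro sum.cong) (auto simp: sum.delta)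
  finally show ?thesis by simp
qed

lemma y_upper:
  assumes "\<forall>j<T. cont j" "dl \<le> (1+eps)*(1+w)"
  shows "yy T e \<le> (1+eps)*(1+w)"
  using assms(1)
proof (induction T)
  case 0 then show ?case using assms(2) by (simp add: y0)
next
  case (Suc T)
  show ?case
  proof (cases "e \<in> set (edges_of (PP T))")
    case True
    have ce: "0 < c e" using cPP[OF True] .
    have "yy T e < 1 + w" using y_le_plen[OF True] Suc.prems cont_iff by fastforce
    moreover have "eps * cc T / c e \<le> eps" using cc_le[OF True] ce epos
      by (simp add: divide_le_eq)
    ultimately have "yy T e * (1 + eps * cc T / c e) \<le> (1+w) * (1+eps)"
      using ypos[of T e] epos cc_pos[of T] ce by (intro mult_mono) auto
    then show ?thesis using True by (simp add: step_y mult.commute)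
  next
    case False
    then show ?thesis using Suc by (simp add: step_y)
  qed
qed

lemma cnt_bound:
  assumes "\<forall>j<T. cont j" "dl \<le> (1+eps)*(1+w)"
  shows "real (cnt e T) \<le> log (1+eps) ((1+eps)*(1+w)/dl)"
  using assms(1)
proof (induction T)
  case 0
  have "1 \<le> (1+eps)*(1+w)/dl" using assms(2) dlpos by simp
  then show ?case using epos by (simp add: cnt_def)
next
  case (Suc T)
  show ?case
  proof (cases "bb T = e")
    case True
    have "dl * (1+eps)^cnt e T < 1 + w"
      using y_cnt[of e T] y_le_plen[OF bb_props(1)[of T]] True Suc.prems cont_iff by fastforce
    then have "(1+eps)^cnt e T < (1+w)/dl" using dlpos by (simp add: pos_less_divide_eq mult.commute)
    then have "(1+eps)^cnt e T * (1+eps) < (1+w)/dl * (1+eps)" using epos by (intro mult_strict_right_mono) auto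
    then have "(1+eps) powr (real (cnt e T) + 1) < (1+eps)*(1+w)/dl"
      using epos dlpos by (simp add: powr_add powr_realpow mult.commute)
    then have "real (cnt e T) + 1 < log (1+eps) ((1+eps)*(1+w)/dl)"
      using epos dlpos wpos by (subst less_log_iff) auto
    moreover have "cnt e (Suc T) = Suc (cnt e T)" using True by (simp add: cnt_def)
    ultimately show ?thesis by simp
  next
    case False
    then have "cnt e (Suc T) = cnt e T" by (simp add: cnt_def)
    then show ?thesis using Suc by simp
  qed
qed

lemma D_step: "DD (Suc i) = DD i + eps * cc i * plen (yy i) (PP i)"
proof -
  let ?S = "set (edges_of (PP i))"
  have "DD (Suc i) - DD i = (\<Sum>e\<in>E. c e * yy (Suc i) e - c e * yy i e)"
    by (simp add: DD_def sum_subtractf)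
  also have "\<dots> = (\<Sum>e\<in>E. if e \<in> ?S then eps * cc i * yy i e else 0)"
    using cPP cpos by (intro sum.cong) (auto simp: step_y field_simps)
  also have "\<dots> = (\<Sum>e\<in>E \<inter> ?S. eps * cc i * yy i e)" by (simp add: sum.inter_restrict finE)
  also have "E \<inter> ?S = ?S" using PP_E by blast
  also have "(\<Sum>e\<in>?S. eps * cc i * yy i e) = eps * cc i * plen (yy i) (PP i)"
    by (simp add: plen_def sum_distrib_left)
  finally show ?thesis by simp
qed

lemma D_sum: "DD i - DD 0 = eps * (\<Sum>j<i. cc j * plen (yy j) (PP j))"
  by (induction i) (simp_all add: D_step algebra_simps)

end

context agl begin

abbreviation "bet \<equiv> beta E c len s t L"

lemma cy_nonneg: "\<forall>e\<in>E. 0 \<le> y e \<Longrightarrow> 0 \<le> (\<Sum>e\<in>E. c e * y e)"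
  using cpos by (intro sum_nonneg) (meson less_imp_le mult_nonneg_nonneg)

lemma beta_set_bdd: "bdd_below {(\<Sum>e\<in>E. c e * y e) | y.
       (\<forall>e\<in>E. 0 \<le> y e) \<and> (\<forall>P\<in>bounded_paths E len s t L. 1 \<le> plen y P)}"
  using cy_nonneg by (intro bdd_belowI[of _ 0]) auto

lemma beta_lower: "(\<forall>e\<in>E. 0 \<le> y e) \<Longrightarrow> (\<forall>P\<in>BP. 1 \<le> plen y P) \<Longrightarrow> bet \<le> (\<Sum>e\<in>E. c e * y e)"
  unfolding beta_def BP_def by (rule cInf_lower[OF _ beta_set_bdd]) auto

lemma beta_nonneg: "0 \<le> bet"
proof -
  have "(\<Sum>e\<in>E. c e * 1) \<in> {(\<Sum>e\<in>E. c e * y e) | y.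
       (\<forall>e\<in>E. 0 \<le> y e) \<and> (\<forall>P\<in>bounded_paths E len s t L. 1 \<le> plen y P)}"
  proof -
    have "\<forall>P\<in>bounded_paths E len s t L. 1 \<le> plen (\<lambda>_. 1::real) P"
    proof
      fix P assume "P \<in> bounded_paths E len s t L"
      then have "set (edges_of P) \<noteq> {}" using BP_edges_ne BP_def by blast
      then have "1 \<le> card (set (edges_of P))" by (simp add: Suc_leI card_gt_0_iff)
      then show "1 \<le> plen (\<lambda>_. 1::real) P" by (simp add: plen_def)
    qed
    then show ?thesis by (intro CollectI exI[of _ "\<lambda>_. 1"]) auto
  qed
  then show ?thesis unfolding beta_def using cy_nonneg
    by (intro cInf_greatest) auto
qed

lemma D_mono: "DD 0 \<le> DD i"
  unfolding DD_def using cpos y_ge_dl by (intro sum_mono mult_left_mono) (auto simp: y0 less_imp_le)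

lemma beta_alpha: "bet * (alpha i - dl * L) \<le> DD i - DD 0"
proof (cases "alpha i \<le> dl * L")
  case True
  then have "bet * (alpha i - dl * L) \<le> 0" using beta_nonneg by (simp add: mult_nonneg_nonpos)
  then show ?thesis using D_mono[of i] by simp
next
  case False
  define q where "q = alpha i - dl * L"
  have q: "0 < q" using False by (simp add: q_def)
  define z where "z e = (yy i e - dl) / q" for e
  have "bet \<le> (\<Sum>e\<in>E. c e * z e)"
  proof (rule beta_lower)
    show "\<forall>e\<in>E. 0 \<le> z e" using y_ge_dl q by (simp add: z_def)
    show "\<forall>P\<in>BP. 1 \<le> plen z P"
    proof
      fix P assume P: "P \<in> BP"
      have "plen z P = (plen (yy i) P - dl * card (set (edges_of P))) / q"
        by (simp add: plen_def z_def sum_divide_distrib[symmetric] sum_subtractf)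
      moreover have "alpha i \<le> plen (yy i) P" using alpha_le[OF P] .
      moreover have "dl * card (set (edges_of P)) \<le> dl * L" using BP_card[OF P] dlpos by simp
      ultimately show "1 \<le> plen z P" using q by (simp add: q_def)
    qed
  qed
  also have "(\<Sum>e\<in>E. c e * z e) = (DD i - DD 0) / q"
    by (simp add: DD_def z_def y0 sum_divide_distrib[symmetric] sum_subtractf algebra_simps)
  finally show ?thesis using q by (simp add: q_def pos_le_divide_eq)
qed

lemma alpha_rec:
  assumes "0 < bet"
  shows "alpha i \<le> dl * L + (eps * (1 + w) / bet) * (\<Sum>j<i. cc j * alpha j)"
proof -
  have "DD i - DD 0 \<le> eps * (\<Sum>j<i. cc j * ((1+w) * alpha j))"
    unfolding D_sum using epos cc_pos orc_bound
    by (intro mult_left_mono sum_mono) (auto simp: less_imp_le)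
  also have "\<dots> = eps * (1+w) * (\<Sum>j<i. cc j * alpha j)"
    by (simp add: sum_distrib_left algebra_simps)
  finally have "bet * (alpha i - dl * L) \<le> eps * (1+w) * (\<Sum>j<i. cc j * alpha j)"
    using beta_alpha[of i] by linarith
  then have "alpha i - dl * L \<le> eps * (1+w) * (\<Sum>j<i. cc j * alpha j) / bet"
    using assms by (simp add: pos_le_divide_eq mult.commute)
  then show ?thesis by simp
qed

lemma alpha_exp:
  assumes "0 < bet"
  shows "alpha i \<le> dl * L * exp (eps * (1 + w) / bet * flow i)"
  unfolding flow_eq
  by (rule gronwall[OF alpha_rec[OF assms]])
     (use cc_pos alpha_nonneg epos wpos assms dlpos in \<open>auto simp: less_imp_le\<close>)

definition "Lam = log (1+eps) ((1+eps)*(1+w)/dl)"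

lemma main_locale:
  assumes dlK: "dl < (1+eps)*(1+w)"
  shows "\<exists>\<tau>. (\<forall>i<\<tau>. cont i) \<and> \<not> cont \<tau>
     \<and> real \<tau> \<le> real (card E) * of_int \<lceil>Lam\<rceil>
     \<and> feasible_Lflow E c len s t L (\<lambda>P. xx \<tau> P / Lam)
     \<and> flow_value E len s t L (\<lambda>P. xx \<tau> P / Lam) = flow \<tau> / Lam
     \<and> (0 < bet \<longrightarrow> 1 \<le> dl * L * exp (eps * (1 + w) / bet * flow \<tau>))"
proof -
  have dlK': "dl \<le> (1+eps)*(1+w)" using dlK by simp
  have Kd: "1 < (1+eps)*(1+w)/dl" using dlK dlpos by simp
  have Lpos: "0 < Lam" unfolding Lam_def using Kd epos by simp
  have Tb: "real T \<le> real (card E) * Lam" if "\<forall>j<T. cont j" for T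
  proof -
    have "real T = (\<Sum>e\<in>E. real (cnt e T))" using sum_cnt[of T] by (metis of_nat_sum)
    also have "\<dots> \<le> (\<Sum>e\<in>E. Lam)" using cnt_bound[OF that dlK'] by (intro sum_mono) (simp add: Lam_def)
    finally show ?thesis by simp
  qed
  have "\<exists>T. \<not> cont T"
  proof (rule ccontr)
    assume "\<not> (\<exists>T. \<not> cont T)"
    then have "real (nat \<lceil>real (card E) * Lam\<rceil> + 1) \<le> real (card E) * Lam"
      using Tb[of "nat \<lceil>real (card E) * Lam\<rceil> + 1"] by blast
    moreover have "real (card E) * Lam \<le> real (nat \<lceil>real (card E) * Lam\<rceil>)" by (rule real_nat_ceiling_ge)
    ultimately show False by simp
  qed
  define \<tau> where "\<tau> = (LEAST T. \<not> cont T)"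
  have tau1: "\<not> cont \<tau>" unfolding \<tau>_def by (rule LeastI_ex) fact
  have tau2: "\<forall>i<\<tau>. cont i" unfolding \<tau>_def using not_less_Least by blast
  note tau = tau1 tau2
  have p1: "real \<tau> \<le> real (card E) * of_int \<lceil>Lam\<rceil>"
  proof -
    have "real (card E) * Lam \<le> real (card E) * of_int \<lceil>Lam\<rceil>"
      by (intro mult_left_mono) auto
    then show ?thesis using Tb[OF tau(2)] by linarith
  qed
  have FFb: "FF e \<tau> / Lam \<le> c e" if e: "e \<in> E" for e
  proof -
    have ce: "0 < c e" using cpos e by auto
    have "dl * (1+eps) powr (FF e \<tau> / c e) \<le> (1+eps)*(1+w)"
      using y_F[OF e, of \<tau>] y_upper[OF tau(2) dlK'] by (meson order_trans)
    then have "(1+eps) powr (FF e \<tau> / c e) \<le> (1+eps)*(1+w)/dl"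
      using dlpos by (simp add: pos_le_divide_eq mult.commute)
    then have "FF e \<tau> / c e \<le> Lam" unfolding Lam_def using epos Kd by (subst le_log_iff) auto
    then show ?thesis using ce Lpos by (simp add: divide_le_eq pos_divide_le_eq mult.commute)
  qed
  have feas: "feasible_Lflow E c len s t L (\<lambda>P. xx \<tau> P / Lam)"
    unfolding feasible_Lflow_def
  proof (intro conjI allI ballI impI)
    fix P show "0 \<le> xx \<tau> P / Lam" using xx_nonneg Lpos by simp
  next
    fix P assume "P \<notin> bounded_paths E len s t L"
    then show "xx \<tau> P / Lam = 0" using xx_out BP_def by simp
  next
    fix e assume e: "e \<in> E"
    have "(\<Sum>P\<in>{P \<in> bounded_paths E len s t L. e \<in> set (edges_of P)}. xx \<tau> P / Lam) = FF e \<tau> / Lam"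
      by (simp add: FF_def BP_def sum_divide_distrib)
    then show "(\<Sum>P\<in>{P \<in> bounded_paths E len s t L. e \<in> set (edges_of P)}. xx \<tau> P / Lam) \<le> c e"
      using FFb[OF e] by simp
  qed
  have val: "flow_value E len s t L (\<lambda>P. xx \<tau> P / Lam) = flow \<tau> / Lam"
    by (simp add: flow_value_def flow_def BP_def sum_divide_distrib)
  have last: "1 \<le> dl * L * exp (eps * (1 + w) / bet * flow \<tau>)" if "0 < bet"
  proof -
    have "1 + w \<le> plen (yy \<tau>) (PP \<tau>)" using tau(1) cont_iff by simp
    then have "1 + w \<le> (1 + w) * alpha \<tau>" using orc_bound by (meson order_trans)
    then have "1 \<le> alpha \<tau>" using wpos by simp
    then show ?thesis using alpha_exp[OF that, of \<tau>] by linarith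
  qed
  show ?thesis using tau p1 feas val last by blast
qed

end


lemma poly_ineq: assumes "0 < (e::real)" "e \<le> 1/3" shows "e * (1 + e) \<le> (1 - e) * (1 + 5*e) * (e - e^2/2)"
proof -
  have "0 \<le> e^2" by simp
  then have a: "0 \<le> 5/2 - 7*e + 5/2*e^2" using assms by linarith
  have "(1 - e) * (1 + 5*e) * (e - e^2/2) - e * (1 + e) = e^2 * (5/2 - 7*e + 5/2*e^2)"
    by (simp add: algebra_simps power2_eq_square power3_eq_cube)
  moreover have "0 \<le> e^2 * (5/2 - 7*e + 5/2*e^2)" using a by simp
  ultimately show ?thesis by linarith
qed

lemma final_arith:
  fixes e u b f l :: real
  assumes e: "0 < e" "e \<le> 1/3" and u: "0 < u" and b: "0 < b" and f0: "0 \<le> f" and l: "e - e^2/2 \<le> l"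
    and h: "u/e - u \<le> e * (1+e) / b * f"
  shows "b / (1 + 5*e) \<le> f / (u / (e * l))"
proof -
  have h1: "e * (1 + e) \<le> (1 - e) * (1 + 5*e) * l"
  proof -
    have "0 \<le> (1 - e) * (1 + 5*e)" using e by simp
    then have "(1 - e) * (1 + 5*e) * (e - e^2/2) \<le> (1 - e) * (1 + 5*e) * l" by (rule mult_left_mono[OF l])
    then show ?thesis using poly_ineq[OF e] by linarith
  qed
  have "b * (u/e - u) \<le> b * (e * (1+e) / b * f)" by (rule mult_left_mono[OF h]) (use b in simp)
  also have "b * (e * (1+e) / b * f) = e * (1+e) * f" using b by simp
  finally have hb: "b * (u/e - u) \<le> e * (1+e) * f" .
  have "e * (b * (u/e - u)) \<le> e * (e * (1+e) * f)" by (rule mult_left_mono[OF hb]) (use e in simp)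
  moreover have "e * (b * (u/e - u)) = b * u * (1 - e)" using e by (simp add: field_simps)
  ultimately have h2: "b * u * (1 - e) \<le> e * (e * (1+e)) * f" by (simp add: mult.assoc)
  have "e * (e * (1+e)) * f \<le> e * ((1 - e) * (1 + 5*e) * l) * f"
    using h1 e f0 by (intro mult_right_mono mult_left_mono) auto
  then have "b * u * (1 - e) \<le> (e * (1 + 5*e) * l * f) * (1 - e)" using h2 by (simp add: algebra_simps)
  then have "b * u \<le> e * (1 + 5*e) * l * f" using e by simp
  moreover have "0 < l"
  proof -
    have "e^2 \<le> e * (1/3)" using e unfolding power2_eq_square by (intro mult_left_mono) auto
    then show ?thesis using l e by linarith
  qed
  ultimately show ?thesis using e u b by (simp add: field_simps)
qed



theorem mainTheorem6:
  fixes E :: "('v \<times> 'v) set" and c :: "'v \<times> 'v \<Rightarrow> real" and len :: "'v \<times> 'v \<Rightarrow> nat"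
    and s t :: 'v and L :: nat and \<epsilon> w \<delta> :: real
    and Orc :: "('v \<times> 'v \<Rightarrow> real) \<Rightarrow> 'v list"
  assumes "finite E"
    and "\<forall>e\<in>E. 0 < c e" and "\<forall>e\<in>E. 1 \<le> len e"
    and "s \<noteq> t" and "0 < L"
    and "bounded_paths E len s t L \<noteq> {}"
    and "0 < \<epsilon>" and "\<epsilon> \<le> 1/3"
    and "w = \<epsilon>"
    and "\<delta> = (1 + \<epsilon>) * (1 + w) / (((1 + \<epsilon>) * (1 + w) * real L) powr (1 / \<epsilon>))"
    and "approx_oracle E len s t L w Orc"
  shows "\<exists>\<tau>. (\<forall>i<\<tau>. ag_continue \<epsilon> \<delta> w Orc c i) \<and> \<not> ag_continue \<epsilon> \<delta> w Orc c \<tau>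
     \<and> real \<tau> \<le> real (card E) * of_int \<lceil>log (1 + \<epsilon>) ((1 + \<epsilon>) * (1 + w) / \<delta>)\<rceil>
     \<and> feasible_Lflow E c len s t L
         (\<lambda>P. fst (ag_state \<epsilon> \<delta> Orc c \<tau>) P / log (1 + \<epsilon>) ((1 + \<epsilon>) * (1 + w) / \<delta>))
     \<and> flow_value E len s t L
         (\<lambda>P. fst (ag_state \<epsilon> \<delta> Orc c \<tau>) P / log (1 + \<epsilon>) ((1 + \<epsilon>) * (1 + w) / \<delta>))
       \<ge> beta E c len s t L / (1 + 5 * \<epsilon>)"
proof -
  note A = assms
  define K where "K = (1 + \<epsilon>) * (1 + w)"
  define M where "M = K * real L"
  have e0: "0 < \<epsilon>" using A by simp
  have Kx: "K = 1 + 2*\<epsilon> + \<epsilon>*\<epsilon>" unfolding K_def using A by (simp add: algebra_simps)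
  have "0 < \<epsilon>*\<epsilon>" using e0 by simp
  then have K1: "1 < K" using Kx e0 by linarith
  have L1: "1 \<le> real L" using A by simp
  have "K * 1 \<le> K * real L" using K1 L1 by (intro mult_left_mono) auto
  then have M1: "1 < M" unfolding M_def using K1 by linarith
  have Mp: "1 < M powr (1/\<epsilon>)"
    using powr_less_mono[of 0 "1/\<epsilon>" M] M1 e0 by simp
  have dl: "\<delta> = K / M powr (1/\<epsilon>)" using A by (simp add: K_def M_def)
  have dpos: "0 < \<delta>" unfolding dl using K1 Mp by (intro divide_pos_pos) auto
  have dK: "\<delta> < K" unfolding dl using K1 Mp by (simp add: divide_less_eq)
  interpret agl E c len s t L \<epsilon> w \<delta> Orc
    using A dpos by unfold_locales auto
  obtain \<tau> where tau: "(\<forall>i<\<tau>. cont i)" "\<not> cont \<tau>"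
     "real \<tau> \<le> real (card E) * of_int \<lceil>Lam\<rceil>"
     "feasible_Lflow E c len s t L (\<lambda>P. xx \<tau> P / Lam)"
     "flow_value E len s t L (\<lambda>P. xx \<tau> P / Lam) = flow \<tau> / Lam"
     "0 < bet \<longrightarrow> 1 \<le> \<delta> * L * exp (\<epsilon> * (1 + w) / bet * flow \<tau>)"
    using main_locale dK unfolding K_def by blast
  define u where "u = ln M"
  define l where "l = ln (1 + \<epsilon>)"
  have u0: "0 < u" using M1 by (simp add: u_def)
  have l0: "0 < l" using e0 by (simp add: l_def)
  have KD: "K / \<delta> = M powr (1/\<epsilon>)" unfolding dl using K1 Mp by simp
  have Lam_eq: "Lam = u / (\<epsilon> * l)"
    unfolding Lam_def K_def[symmetric] KD log_def using M1 e0
    by (simp add: ln_powr u_def l_def field_simps)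
  have Lam0: "0 < Lam" using Lam_eq u0 l0 e0 by simp
  have f0: "0 \<le> flow \<tau>" unfolding flow_eq using cc_pos by (simp add: sum_nonneg less_imp_le)
  have val: "bet / (1 + 5 * \<epsilon>) \<le> flow \<tau> / Lam"
  proof (cases "0 < bet")
    case False
    then have "bet / (1 + 5 * \<epsilon>) \<le> 0" using e0 by (simp add: divide_nonpos_pos)
    also have "0 \<le> flow \<tau> / Lam" using f0 Lam0 by simp
    finally show ?thesis .
  next
    case True
    have "1 \<le> \<delta> * L * exp (\<epsilon> * (1 + w) / bet * flow \<tau>)" using tau(6) True by simp
    then have "0 \<le> ln (\<delta> * L * exp (\<epsilon> * (1 + w) / bet * flow \<tau>))" by simp
    also have "\<dots> = ln (\<delta> * L) + \<epsilon> * (1 + w) / bet * flow \<tau>"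
      using dpos L1 by (subst ln_mult) auto
    also have "ln (\<delta> * L) = ln \<delta> + ln L" using dpos L1 by (subst ln_mult) auto
    also have "ln \<delta> = ln K - ln (M powr (1/\<epsilon>))" unfolding dl using K1 Mp M1 by (simp add: ln_div)
    also have "ln (M powr (1/\<epsilon>)) = u / \<epsilon>" using M1 by (simp add: ln_powr u_def)
    also have "ln K = u - ln L" unfolding u_def M_def using K1 A by (simp add: ln_mult)
    finally have h: "u / \<epsilon> - u \<le> \<epsilon> * (1 + \<epsilon>) / bet * flow \<tau>" using A by simp
    have "bet / (1 + 5 * \<epsilon>) \<le> flow \<tau> / (u / (\<epsilon> * l))"
      by (rule final_arith[OF e0 _ u0 True f0 _ h]) (use A ln_lower[of \<epsilon>] e0 in \<open>auto simp: l_def\<close>)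
    then show ?thesis using Lam_eq by simp
  qed
  show ?thesis
    using tau(1-5) val unfolding cont_def xx_def Lam_def K_def
    by (intro exI[of _ \<tau>]) auto
qed

end
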